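(* Let $(u,z,\mathcal R)$ be a (sufficiently regular) solution of the linearized system \[ \partial_tu=\bar\kappa\Delta_yu-\Big(1-\frac1\gamma\Big)\dot z,\ \ u(1,t)=0,\qquad z=\frac1{R_gT_\infty}\Big(-\frac{2\sigma}{R_*^2}\mathcal R+\frac{4\mu_l}{R_*}\dot{\mathcal R}+\rho_lR_*\ddot{\mathcal R}\Big),\qquad \int_{B_1}u\,dx=-\frac{4\pi}3z-4\pi\frac{\rho_*}{R_*}\mathcal R. \] Then, with \[ \mathcal E^L_{\rm total}=-4\pi\sigma\mathcal R^2-4\pi R_gT_\infty R_*^2\mathcal Rz-\frac{2\pi R_gT_\infty R_*^3}{3\rho_*}z^2+\frac{c_v\gamma T_\infty R_*^3}{2\rho_*}\int_{B_1}u^2dx+2\pi\rho_lR_*^3\dot{\mathcal R}^2, \] one has \[ \frac{d}{dt}\mathcal E^L_{\rm total}=-\frac{\kappa T_\infty}{\rho_*^2}R_*\int_{B_1}|\nabla_yu|^2dx-16\pi\mu_lR_*\dot{\mathcal R}^2. \]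
   Context: Parameters: $\kappa>0$, $\gamma>1$, $c_v>0$, $R_g>0$ with $c_p=\gamma c_v=c_v+R_g$; $T_\infty>0$, $p_{\infty,*}>0$, $\sigma>0$, $\mu_l\ge0$, $\rho_l>0$; $\rho_*,R_*>0$ with $R_gT_\infty\rho_*=p_{\infty,*}+2\sigma/R_*$; $\bar\kappa=\kappa/(c_p\rho_*R_*^2)$. $B_1$ is the unit ball of $\mathbb R^3$, $u(y,t)$ is identified with the radial function $u(|x|,t)$, $\Delta_y$ the radial Laplacian $y^{-2}\partial_y(y^2\partial_y)$ and $\nabla_y$ the gradient in $x$. *)

theory Defs
  imports "HOL-Analysis.Analysis"
begin

definition ball_int :: "(real \<Rightarrow> real) \<Rightarrow> real" where
  "ball_int f = integral (ball (0::real^3) 1) (\<lambda>x. f (norm x))"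

end

theory Submission
  imports Defs
begin

lemma ball3_emeasure: "r \<ge> 0 \<Longrightarrow> emeasure lborel (ball (0::real^3) r) = ennreal (4/3*pi*r^3)"
  by (simp add: emeasure_ball unit_ball_vol_3)
lemma cball3_emeasure: "r \<ge> 0 \<Longrightarrow> emeasure lborel (cball (0::real^3) r) = ennreal (4/3*pi*r^3)"
  by (simp add: emeasure_cball unit_ball_vol_3)

lemma radial_measure:
  "distr (density lborel (indicator (ball (0::real^3) 1))) borel norm =
   density lborel (\<lambda>r. ennreal (4*pi*r\<^sup>2) * indicator {0..1} r)" (is "?N = ?N'")
proof (rule measure_eqI_lessThan)
  show "sets ?N = sets borel" by simp
  show "sets ?N' = sets borel" by simp
  have eN: "emeasure ?N {a<..} = emeasure lborel (ball (0::real^3) 1 \<inter> {x. a < norm x})" for a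
    by (subst emeasure_distr) (auto simp: emeasure_restricted vimage_def Int_commute)
  have eN': "emeasure ?N' {a<..} = ennreal (4/3*pi*(1 - (max a 0)^3)) * indicator {..<1} a" for a
  proof -
    have "emeasure ?N' {a<..} = (\<integral>\<^sup>+r. ennreal (4*pi*r\<^sup>2) * indicator {0..1} r * indicator {a<..} r \<partial>lborel)"
      by (subst emeasure_density) (auto simp: mult.assoc)
    also have "\<dots> = (\<integral>\<^sup>+r. ennreal (4*pi*r\<^sup>2) * indicator {max a 0..1} r * indicator {..<1} a \<partial>lborel)"
    proof (rule nn_integral_cong_AE)
      show "AE r in lborel. ennreal (4*pi*r\<^sup>2) * indicator {0..1} r * indicator {a<..} r =
          ennreal (4*pi*r\<^sup>2) * indicator {max a 0..1} r * indicator {..<1} a"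
        using AE_lborel_singleton[of a]
        by eventually_elim (auto split: split_indicator)
    qed
    also have "\<dots> = (\<integral>\<^sup>+r. ennreal (4*pi*r\<^sup>2) * indicator {max a 0..1} r \<partial>lborel) * indicator {..<1} a"
      by (simp add: nn_integral_multc)
    also have "\<dots> = ennreal (4/3*pi*(1 - (max a 0)^3)) * indicator {..<1} a"
    proof (cases "a < 1")
      case True
      have "(\<integral>\<^sup>+r. ennreal (4*pi*r\<^sup>2) * indicator {max a 0..1} r \<partial>lborel) = 
        ennreal (4/3*pi*1^3 - 4/3*pi*(max a 0)^3)"
        by (rule nn_integral_FTC_Icc[where F="\<lambda>r. 4/3*pi*r^3"])
          (use True in \<open>auto intro!: derivative_eq_intros simp: power2_eq_square\<close>)
      then show ?thesis by (simp add: right_diff_distrib)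
    qed simp
    finally show ?thesis .
  qed
  have eq: "emeasure ?N {a<..} = emeasure ?N' {a<..}" for a
  proof -
    consider "a < 0" | "0 \<le> a" "a < 1" | "1 \<le> a" by linarith
    then show ?thesis
    proof cases
      case 1
      then have "ball 0 1 \<inter> {x. a < norm x} = ball (0::real^3) 1" by (auto intro: less_le_trans[OF _ norm_ge_zero])
      then show ?thesis using 1 by (simp add: eN eN' ball3_emeasure)
    next
      case 2
      then have "ball 0 1 \<inter> {x. a < norm x} = ball (0::real^3) 1 - cball 0 a" by auto
      moreover have "emeasure lborel (ball (0::real^3) 1 - cball 0 a) = 
          emeasure lborel (ball (0::real^3) 1) - emeasure lborel (cball (0::real^3) a)"
        using 2 by (intro emeasure_Diff) (auto simp: cball3_emeasure)
      ultimately show ?thesis using 2 unfolding eN eN'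
        by (simp add: ball3_emeasure cball3_emeasure ennreal_minus right_diff_distrib)
    next
      case 3
      then have "ball 0 1 \<inter> {x. a < norm x} = ({}::(real^3) set)" by auto
      then show ?thesis using 3 by (simp add: eN eN')
    qed
  qed
  show "emeasure ?N {x<..} = emeasure ?N' {x<..}" for x by (rule eq)
  show "emeasure ?N {x<..} < \<infinity>" for x by (simp add: eq eN' ennreal_mult_less_top split: split_indicator)
qed

lemma polar:
  fixes f :: "real \<Rightarrow> real"
  assumes f: "continuous_on {0..1} f"
  shows "integral (ball (0::real^3) 1) (\<lambda>x. f (norm x)) = 4*pi * integral {0..1} (\<lambda>r. r\<^sup>2 * f r)"
proof -
  define g where "g r = f (max 0 (min 1 r))" for r
  have gc: "continuous_on UNIV g"
    unfolding g_def
    by (rule continuous_on_compose2[OF f]) (auto intro!: continuous_intros)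
  have gm[measurable]: "g \<in> borel_measurable borel"
    using gc by (intro borel_measurable_continuous_onI)
  let ?B = "ball (0::real^3) 1"
  have 1: "integral ?B (\<lambda>x. f (norm x)) = integral ?B (\<lambda>x. g (norm x))"
    by (rule integral_cong) (auto simp: g_def)
  have "set_integrable lborel (cball (0::real^3) 1) (\<lambda>x. g (norm x))"
    unfolding set_integrable_def
    by (rule borel_integrable_compact) (auto intro!: continuous_on_compose2[OF gc] continuous_intros)
  then have int1: "set_integrable lborel ?B (\<lambda>x. g (norm x))"
    by (rule set_integrable_subset) auto
  have int2: "set_integrable lborel {0..1::real} (\<lambda>r. r\<^sup>2 * g r)"
    unfolding set_integrable_def
    by (rule borel_integrable_compact) (auto intro!: continuous_on_compose2[OF gc] continuous_intros)
  have "integral ?B (\<lambda>x. g (norm x)) = (LINT x:?B|lborel. g (norm x))"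
    by (rule set_borel_integral_eq_integral(2)[symmetric, OF int1])
  also have "\<dots> = (\<integral>x. indicator ?B x *\<^sub>R g (norm x) \<partial>lborel)"
    by (simp add: set_lebesgue_integral_def)
  also have "\<dots> = (\<integral>x. g (norm x) \<partial>(density lborel (\<lambda>x. ennreal (indicator ?B x))))"
    by (rule integral_density[symmetric]) (auto intro!: borel_measurable_indicator borel_open)
  also have "(density lborel (\<lambda>x. ennreal (indicator ?B x))) = density lborel (indicator ?B)"
    by (simp add: ennreal_indicator)
  also have "(\<integral>x. g (norm x) \<partial>(density lborel (indicator ?B))) = 
      (\<integral>r. g r \<partial>(distr (density lborel (indicator ?B)) borel norm))"
    by (rule integral_distr[symmetric]) auto
  also have "distr (density lborel (indicator ?B)) borel norm = 
     density lborel (\<lambda>r. ennreal (4*pi*r\<^sup>2 * indicator {0..1} r))"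
    unfolding radial_measure by (simp add: ennreal_mult' ennreal_indicator)
  also have "(\<integral>r. g r \<partial>density lborel (\<lambda>r. ennreal (4*pi*r\<^sup>2 * indicator {0..1} r))) =
     (\<integral>r. (4*pi*r\<^sup>2 * indicator {0..1} r) *\<^sub>R g r \<partial>lborel)"
    by (rule integral_density) auto
  also have "\<dots> = 4*pi * (\<integral>r. indicator {0..1} r *\<^sub>R (r\<^sup>2 * g r) \<partial>lborel)"
    by (subst integral_mult_right_zero[symmetric]) (simp add: mult_ac)
  also have "(\<integral>r. indicator {0..1} r *\<^sub>R (r\<^sup>2 * g r) \<partial>lborel) = integral {0..1} (\<lambda>r. r\<^sup>2 * g r)"
    using set_borel_integral_eq_integral(2)[OF int2] by (simp add: set_lebesgue_integral_def)
  also have "integral {0..1} (\<lambda>r. r\<^sup>2 * g r) = integral {0..1} (\<lambda>r. r\<^sup>2 * f r)"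
    by (rule integral_cong) (auto simp: g_def)
  finally show ?thesis using 1 by simp
qed

lemma cont_slice:
  assumes "continuous_on (A \<times> B) (\<lambda>(y,s). h y s)" "s \<in> B"
  shows "continuous_on A (\<lambda>y. h y s)"
proof -
  have "continuous_on A ((\<lambda>(y,s). h y s) \<circ> (\<lambda>y. (y,s)))"
    by (rule continuous_on_compose) (auto intro!: continuous_intros continuous_on_subset[OF assms(1)] simp: assms(2))
  then show ?thesis by (simp add: o_def)
qed

lemma cont_swap:
  assumes "continuous_on (A \<times> B) (\<lambda>(y,s). h y s)" "U \<subseteq> B"
  shows "continuous_on (U \<times> A) (\<lambda>(s,y). h y s)"
proof -
  have sub: "(\<lambda>(s,y). (y,s)) ` (U \<times> A) \<subseteq> A \<times> B" using assms(2) by auto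
  have "continuous_on (U \<times> A) ((\<lambda>(y,s). h y s) \<circ> (\<lambda>(s,y). (y,s)))"
    by (rule continuous_on_compose[OF _ continuous_on_subset[OF assms(1) sub]])
      (auto intro!: continuous_intros simp: case_prod_unfold)
  then show ?thesis by (simp add: o_def case_prod_unfold)
qed

theorem proposition3p4:
  fixes \<kappa> \<gamma> cv Rg cp Tinf pinfs \<sigma> \<mu>l \<rho>l \<rho>s Rs :: real
    and u uy uyy ut :: "real \<Rightarrow> real \<Rightarrow> real"
    and R Rd Rdd z zd :: "real \<Rightarrow> real"
    and I :: "real set" and t :: real
  assumes par: "\<kappa> > 0" "\<gamma> > 1" "cv > 0" "Rg > 0" "cp = \<gamma> * cv" "cp = cv + Rg"
      "Tinf > 0" "pinfs > 0" "\<sigma> > 0" "\<mu>l \<ge> 0" "\<rho>l > 0" "\<rho>s > 0" "Rs > 0"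
      "Rg * Tinf * \<rho>s = pinfs + 2 * \<sigma> / Rs"
    and I: "open I" "t \<in> I"
    \<comment> \<open>regularity of u on [0,1] x I\<close>
    and u_y: "\<And>s y. s \<in> I \<Longrightarrow> y \<in> {0..1} \<Longrightarrow>
        ((\<lambda>r. u r s) has_real_derivative uy y s) (at y within {0..1})"
    and u_yy: "\<And>s y. s \<in> I \<Longrightarrow> y \<in> {0..1} \<Longrightarrow>
        ((\<lambda>r. uy r s) has_real_derivative uyy y s) (at y within {0..1})"
    and u_t: "\<And>s y. s \<in> I \<Longrightarrow> y \<in> {0..1} \<Longrightarrow>
        ((\<lambda>\<tau>. u y \<tau>) has_real_derivative ut y s) (at s)"
    and cont: "continuous_on ({0..1} \<times> I) (\<lambda>(y,s). u y s)"
      "continuous_on ({0..1} \<times> I) (\<lambda>(y,s). uy y s)"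
      "continuous_on ({0..1} \<times> I) (\<lambda>(y,s). uyy y s)"
      "continuous_on ({0..1} \<times> I) (\<lambda>(y,s). ut y s)"
    \<comment> \<open>regularity of R and z\<close>
    and R_t: "\<And>s. s \<in> I \<Longrightarrow> (R has_real_derivative Rd s) (at s)"
    and Rd_t: "\<And>s. s \<in> I \<Longrightarrow> (Rd has_real_derivative Rdd s) (at s)"
    and z_t: "\<And>s. s \<in> I \<Longrightarrow> (z has_real_derivative zd s) (at s)"
    \<comment> \<open>the linearized system\<close>
    and pde: "\<And>s y. s \<in> I \<Longrightarrow> y \<in> {0<..1} \<Longrightarrow>
        ut y s = \<kappa> / (cp * \<rho>s * Rs\<^sup>2) * (uyy y s + 2 / y * uy y s) - (1 - 1 / \<gamma>) * zd s"
    and bc: "\<And>s. s \<in> I \<Longrightarrow> u 1 s = 0"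
    and zeq: "\<And>s. s \<in> I \<Longrightarrow>
        z s = 1 / (Rg * Tinf) * (- 2 * \<sigma> / Rs\<^sup>2 * R s + 4 * \<mu>l / Rs * Rd s + \<rho>l * Rs * Rdd s)"
    and mass: "\<And>s. s \<in> I \<Longrightarrow>
        ball_int (\<lambda>y. u y s) = - 4 * pi / 3 * z s - 4 * pi * \<rho>s / Rs * R s"
  shows "((\<lambda>s. - 4 * pi * \<sigma> * (R s)\<^sup>2 - 4 * pi * Rg * Tinf * Rs\<^sup>2 * R s * z s
              - 2 * pi * Rg * Tinf * Rs ^ 3 / (3 * \<rho>s) * (z s)\<^sup>2
              + cv * \<gamma> * Tinf * Rs ^ 3 / (2 * \<rho>s) * ball_int (\<lambda>y. (u y s)\<^sup>2)
              + 2 * pi * \<rho>l * Rs ^ 3 * (Rd s)\<^sup>2)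
          has_real_derivative
           (- \<kappa> * Tinf / \<rho>s\<^sup>2 * Rs * ball_int (\<lambda>y. (uy y t)\<^sup>2)
            - 16 * pi * \<mu>l * Rs * (Rd t)\<^sup>2)) (at t)"
proof -
  define c where "c = \<kappa> / (cp * \<rho>s * Rs\<^sup>2)"
  define k where "k = 1 - 1 / \<gamma>"
  obtain \<delta> where \<delta>: "\<delta> > 0" "cball t \<delta> \<subseteq> I"
    using I open_contains_cball by blast
  let ?U = "cball t \<delta>"
  define J where "J s = integral {0..1} (\<lambda>r. r\<^sup>2 * (u r s)\<^sup>2)" for s
  have contu: "continuous_on {0..1} (\<lambda>y. u y s)" if "s \<in> I" for s
    using cont_slice[OF cont(1) that] .
  have contuy: "continuous_on {0..1} (\<lambda>y. uy y s)" if "s \<in> I" for s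
    using cont_slice[OF cont(2) that] .
  have contuyy: "continuous_on {0..1} (\<lambda>y. uyy y s)" if "s \<in> I" for s
    using cont_slice[OF cont(3) that] .
  have contut: "continuous_on {0..1} (\<lambda>y. ut y s)" if "s \<in> I" for s
    using cont_slice[OF cont(4) that] .
  have bJ: "ball_int (\<lambda>y. (u y s)\<^sup>2) = 4 * pi * J s" if "s \<in> I" for s
    unfolding ball_int_def J_def
    by (rule polar) (auto intro!: continuous_intros contu that)
  define A where "A = integral {0..1} (\<lambda>r. r\<^sup>2 * (2 * u r t * ut r t))"
  have Jd: "(J has_field_derivative A) (at t)"
  proof -
    have "((\<lambda>s. integral (cbox 0 1) (\<lambda>r. r\<^sup>2 * (u r s)\<^sup>2)) has_field_derivative
        integral (cbox 0 1) (\<lambda>r. r\<^sup>2 * (2 * u r t * ut r t))) (at t within ?U)"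
    proof (rule leibniz_rule_field_derivative)
      fix s r assume s: "s \<in> ?U" and r: "r \<in> cbox 0 (1::real)"
      have "s \<in> I" "r \<in> {0..1}" using s r \<delta> by auto
      have d: "((\<lambda>s. u r s) has_real_derivative ut r s) (at s)"
        using u_t[OF \<open>s \<in> I\<close> \<open>r \<in> {0..1}\<close>] by simp
      have "((\<lambda>s. r\<^sup>2 * (u r s)\<^sup>2) has_field_derivative r\<^sup>2 * (2 * u r s * ut r s)) (at s)"
        using DERIV_cmult[OF DERIV_mult[OF d d], of "r\<^sup>2"] by (simp add: power2_eq_square algebra_simps)
      then show "((\<lambda>s. r\<^sup>2 * (u r s)\<^sup>2) has_field_derivative r\<^sup>2 * (2 * u r s * ut r s)) (at s within ?U)"
        by (rule has_field_derivative_at_within)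
    next
      fix s assume s: "s \<in> ?U"
      then have "s \<in> I" using \<delta> by auto
      show "(\<lambda>r. r\<^sup>2 * (u r s)\<^sup>2) integrable_on cbox 0 1"
        by (rule integrable_continuous) (auto intro!: continuous_intros contu[OF \<open>s \<in> I\<close>])
    next
      have a: "continuous_on (?U \<times> {0..1}) (\<lambda>x. u (snd x) (fst x))"
        using cont_swap[OF cont(1) \<delta>(2)] by (simp add: case_prod_unfold)
      have b: "continuous_on (?U \<times> {0..1}) (\<lambda>x. ut (snd x) (fst x))"
        using cont_swap[OF cont(4) \<delta>(2)] by (simp add: case_prod_unfold)
      have "continuous_on (?U \<times> {0..1}) (\<lambda>x. (snd x)\<^sup>2 * (2 * u (snd x) (fst x) * ut (snd x) (fst x)))"
        by (intro continuous_on_mult continuous_on_power continuous_on_snd continuous_on_const a b continuous_on_id)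
      then show "continuous_on (?U \<times> cbox 0 1) (\<lambda>(s, r). r\<^sup>2 * (2 * u r s * ut r s))"
        by (simp add: case_prod_unfold)
    next
      show "t \<in> ?U" using \<delta> by auto
    next
      show "convex ?U" by simp
    qed
    moreover have "t \<in> interior ?U" using \<delta> by auto
    ultimately show ?thesis
      using at_within_interior[of t ?U] by (simp add: J_def[abs_def] A_def)
  qed
  have tI: "t \<in> I" by (rule I(2))
  define P where "P = integral {0..1} (\<lambda>r. r\<^sup>2 * (uy r t)\<^sup>2)"
  define Q where "Q = integral {0..1} (\<lambda>r. r\<^sup>2 * u r t)"
  have cu: "continuous_on {0..1} (\<lambda>y. u y t)" by (rule contu[OF tI])
  have cuy: "continuous_on {0..1} (\<lambda>y. uy y t)" by (rule contuy[OF tI])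
  have cuyy: "continuous_on {0..1} (\<lambda>y. uyy y t)" by (rule contuyy[OF tI])
  have cut: "continuous_on {0..1} (\<lambda>y. ut y t)" by (rule contut[OF tI])
  have bP: "ball_int (\<lambda>y. (uy y t)\<^sup>2) = 4 * pi * P"
    unfolding ball_int_def P_def
    by (rule polar) (intro continuous_on_power cuy)
  have bQ: "ball_int (\<lambda>y. u y t) = 4 * pi * Q"
    unfolding ball_int_def Q_def
    by (rule polar) (rule cu)
  have pde': "r\<^sup>2 * ut r t = c * (r\<^sup>2 * uyy r t + 2 * r * uy r t) - k * r\<^sup>2 * zd t"
    if r: "r \<in> {0..1}" for r
  proof (cases "r = 0")
    case True then show ?thesis by simp
  next
    case False
    with r have "r \<in> {0<..1}" by auto
    have e: "r\<^sup>2 * (2 / r * uy r t) = 2 * r * uy r t" using False by (simp add: power2_eq_square field_simps)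
    from pde[OF tI \<open>r \<in> {0<..1}\<close>] have "r\<^sup>2 * ut r t = r\<^sup>2 * (c * (uyy r t + 2 / r * uy r t) - k * zd t)"
      by (simp add: c_def k_def)
    also have "\<dots> = c * (r\<^sup>2 * uyy r t + r\<^sup>2 * (2 / r * uy r t)) - k * r\<^sup>2 * zd t"
      by (simp add: algebra_simps)
    finally show ?thesis using e by simp
  qed
  define f where "f r = r\<^sup>2 * u r t * uy r t" for r
  define f' where "f' r = u r t * (r\<^sup>2 * uyy r t + 2 * r * uy r t) + r\<^sup>2 * (uy r t)\<^sup>2" for r
  have "(f' has_integral (f 1 - f 0)) {0..1}"
  proof (rule fundamental_theorem_of_calculus)
    fix x :: real assume x: "x \<in> {0..1}"
    have d1: "((\<lambda>r. u r t) has_real_derivative uy x t) (at x within {0..1})" by (rule u_y[OF tI x])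
    have d2: "((\<lambda>r. uy r t) has_real_derivative uyy x t) (at x within {0..1})" by (rule u_yy[OF tI x])
    have d0: "((\<lambda>r. r\<^sup>2) has_real_derivative 2 * x) (at x within {0..1})"
      using DERIV_pow[of 2 x] by (simp add: has_field_derivative_at_within)
    have "(f has_real_derivative f' x) (at x within {0..1})"
      using DERIV_mult[OF DERIV_mult[OF d0 d1] d2] unfolding f_def f'_def
      by (simp add: power2_eq_square algebra_simps)
    then show "(f has_vector_derivative f' x) (at x within {0..1})"
      by (simp add: has_real_derivative_iff_has_vector_derivative)
  qed simp
  moreover have "f 1 - f 0 = 0" using bc[OF tI] by (simp add: f_def)
  ultimately have FTC: "(f' has_integral 0) {0..1}" by simp
  define I1 where "I1 = integral {0..1} (\<lambda>r. u r t * (r\<^sup>2 * uyy r t + 2 * r * uy r t))"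
  have i1: "(\<lambda>r. u r t * (r\<^sup>2 * uyy r t + 2 * r * uy r t)) integrable_on {0..1}"
    by (intro integrable_continuous_interval continuous_intros cu cuy cuyy)
  have i2: "(\<lambda>r. r\<^sup>2 * (uy r t)\<^sup>2) integrable_on {0..1}"
    by (intro integrable_continuous_interval continuous_intros cuy)
  have i3: "(\<lambda>r. r\<^sup>2 * u r t) integrable_on {0..1}"
    by (intro integrable_continuous_interval continuous_intros cu)
  have "integral {0..1} f' = I1 + P"
    unfolding f'_def I1_def P_def by (rule integral_add[OF i1 i2])
  with FTC have I1P: "I1 = - P" by (simp add: integral_unique)
  have "A = integral {0..1} (\<lambda>r. 2 * c * (u r t * (r\<^sup>2 * uyy r t + 2 * r * uy r t)) - 2 * k * zd t * (r\<^sup>2 * u r t))"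
    unfolding A_def
  proof (rule integral_cong)
    fix r :: real assume "r \<in> {0..1}"
    have "r\<^sup>2 * (2 * u r t * ut r t) = 2 * u r t * (r\<^sup>2 * ut r t)" by (simp add: algebra_simps)
    also have "\<dots> = 2 * u r t * (c * (r\<^sup>2 * uyy r t + 2 * r * uy r t) - k * r\<^sup>2 * zd t)"
      using pde'[OF \<open>r \<in> {0..1}\<close>] by simp
    also have "\<dots> = 2 * c * (u r t * (r\<^sup>2 * uyy r t + 2 * r * uy r t)) - 2 * k * zd t * (r\<^sup>2 * u r t)"
      by (simp add: algebra_simps)
    finally show "r\<^sup>2 * (2 * u r t * ut r t) = 2 * c * (u r t * (r\<^sup>2 * uyy r t + 2 * r * uy r t)) - 2 * k * zd t * (r\<^sup>2 * u r t)" .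
  qed
  also have "\<dots> = 2 * c * I1 - 2 * k * zd t * Q"
  proof -
    have "integral {0..1} (\<lambda>r. 2 * c * (u r t * (r\<^sup>2 * uyy r t + 2 * r * uy r t)) - 2 * k * zd t * (r\<^sup>2 * u r t))
      = integral {0..1} (\<lambda>r. 2 * c * (u r t * (r\<^sup>2 * uyy r t + 2 * r * uy r t))) - integral {0..1} (\<lambda>r. 2 * k * zd t * (r\<^sup>2 * u r t))"
      by (rule integral_diff) (intro integrable_on_mult_right i1 i3)+
    then show ?thesis by (simp add: I1_def Q_def)
  qed
  finally have AV: "A = - 2 * c * P - 2 * k * zd t * Q" using I1P by simp
  define C where "C = cv * \<gamma> * Tinf * Rs ^ 3 / (2 * \<rho>s)"
  define G where "G s = - 4 * pi * \<sigma> * (R s)\<^sup>2 - 4 * pi * Rg * Tinf * Rs\<^sup>2 * R s * z s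
              - 2 * pi * Rg * Tinf * Rs ^ 3 / (3 * \<rho>s) * (z s)\<^sup>2
              + C * (4 * pi * J s)
              + 2 * pi * \<rho>l * Rs ^ 3 * (Rd s)\<^sup>2" for s
  have dR: "(R has_real_derivative Rd t) (at t)" by (rule R_t[OF tI])
  have dRd: "(Rd has_real_derivative Rdd t) (at t)" by (rule Rd_t[OF tI])
  have dz: "(z has_real_derivative zd t) (at t)" by (rule z_t[OF tI])
  have dR2: "((\<lambda>s. (R s)\<^sup>2) has_real_derivative 2 * R t * Rd t) (at t)"
    using DERIV_mult[OF dR dR] by (simp add: power2_eq_square algebra_simps)
  have dRd2: "((\<lambda>s. (Rd s)\<^sup>2) has_real_derivative 2 * Rd t * Rdd t) (at t)"
    using DERIV_mult[OF dRd dRd] by (simp add: power2_eq_square algebra_simps)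
  have dz2: "((\<lambda>s. (z s)\<^sup>2) has_real_derivative 2 * z t * zd t) (at t)"
    using DERIV_mult[OF dz dz] by (simp add: power2_eq_square algebra_simps)
  have dRz: "((\<lambda>s. R s * z s) has_real_derivative Rd t * z t + R t * zd t) (at t)"
    using DERIV_mult[OF dR dz] by (simp add: mult.commute)
  have dRz': "((\<lambda>s. 4 * pi * Rg * Tinf * Rs\<^sup>2 * R s * z s) has_real_derivative 4 * pi * Rg * Tinf * Rs\<^sup>2 * (Rd t * z t + R t * zd t)) (at t)"
    using DERIV_cmult[OF dRz, of "4 * pi * Rg * Tinf * Rs\<^sup>2"] by (simp add: mult.assoc)
  define D where "D = - 4 * pi * \<sigma> * (2 * R t * Rd t) - 4 * pi * Rg * Tinf * Rs\<^sup>2 * (Rd t * z t + R t * zd t)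
              - 2 * pi * Rg * Tinf * Rs ^ 3 / (3 * \<rho>s) * (2 * z t * zd t)
              + C * (4 * pi * A)
              + 2 * pi * \<rho>l * Rs ^ 3 * (2 * Rd t * Rdd t)"
  have GD: "(G has_real_derivative D) (at t)"
    unfolding G_def[abs_def] D_def
    by (intro DERIV_add DERIV_diff DERIV_cmult dR2 dRd2 dz2 Jd DERIV_mult[OF DERIV_const dRz, simplified] dRz')
  have cvpos: "cv > 0" "\<gamma> > 0" "cp > 0" "Rs > 0" "\<rho>s > 0" "Tinf > 0" "Rg > 0"
    using par by auto
  have Rgv: "Rg = \<gamma> * cv - cv" using par(5,6) by simp
  have Qv: "Q = - z t / 3 - \<rho>s / Rs * R t"
  proof -
    have "4*pi*Q = 4*pi*(- z t / 3 - \<rho>s / Rs * R t)" using mass[OF tI] bQ by (simp add: algebra_simps)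
    then show ?thesis by simp
  qed
  have Cc: "C * c = \<kappa> * Tinf * Rs / (2 * \<rho>s\<^sup>2)"
    unfolding C_def c_def using cvpos par(5) by (simp add: field_simps power2_eq_square power3_eq_cube)
  have Ck: "C * k = Rg * Tinf * Rs ^ 3 / (2 * \<rho>s)"
    unfolding C_def k_def Rgv using cvpos by (simp add: field_simps)
  have CA: "C * (4*pi*A) = - \<kappa> * Tinf / \<rho>s\<^sup>2 * Rs * (4*pi*P) + 4*pi*Rg*Tinf*Rs^3/(3*\<rho>s) * z t * zd t
       + 4*pi*Rg*Tinf*Rs\<^sup>2 * R t * zd t"
  proof -
    have "C * (4*pi*A) = - 8 * pi * (C * c) * P - 8 * pi * (C * k) * zd t * Q"
      unfolding AV by (simp add: algebra_simps)
    also have "\<dots> = - \<kappa> * Tinf / \<rho>s\<^sup>2 * Rs * (4*pi*P) + 4*pi*Rg*Tinf*Rs^3/(3*\<rho>s) * z t * zd t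
       + 4*pi*Rg*Tinf*Rs\<^sup>2 * R t * zd t"
      unfolding Cc Ck Qv using cvpos by (simp add: field_simps power2_eq_square power3_eq_cube)
    finally show ?thesis .
  qed
  have zz: "Rg * Tinf * z t = - 2 * \<sigma> / Rs\<^sup>2 * R t + 4 * \<mu>l / Rs * Rd t + \<rho>l * Rs * Rdd t"
    using zeq[OF tI] cvpos by (simp add: field_simps)
  have e1: "4 * pi * Rg * Tinf * Rs\<^sup>2 * (Rd t * z t) = 4 * pi * Rs\<^sup>2 * Rd t * (Rg * Tinf * z t)"
    by (simp add: algebra_simps)
  have Dv: "D = - \<kappa> * Tinf / \<rho>s\<^sup>2 * Rs * ball_int (\<lambda>y. (uy y t)\<^sup>2) - 16 * pi * \<mu>l * Rs * (Rd t)\<^sup>2"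
    unfolding D_def CA bP distrib_left[of "4 * pi * Rg * Tinf * Rs\<^sup>2"] e1 zz
    using cvpos by (simp add: field_simps power2_eq_square power3_eq_cube)
  obtain \<epsilon> where \<epsilon>: "\<epsilon> > 0" "ball t \<epsilon> \<subseteq> I" using I open_contains_ball by blast
  show ?thesis
    unfolding Dv[symmetric]
  proof (rule has_field_derivative_transform_within_open[OF GD _ _])
    show "open (ball t \<epsilon>)" by simp
    show "t \<in> ball t \<epsilon>" using \<epsilon> by simp
    fix s assume "s \<in> ball t \<epsilon>"
    then have "s \<in> I" using \<epsilon> by auto
    then show "G s = - 4 * pi * \<sigma> * (R s)\<^sup>2 - 4 * pi * Rg * Tinf * Rs\<^sup>2 * R s * z s
              - 2 * pi * Rg * Tinf * Rs ^ 3 / (3 * \<rho>s) * (z s)\<^sup>2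
              + cv * \<gamma> * Tinf * Rs ^ 3 / (2 * \<rho>s) * ball_int (\<lambda>y. (u y s)\<^sup>2)
              + 2 * pi * \<rho>l * Rs ^ 3 * (Rd s)\<^sup>2"
      unfolding G_def C_def using bJ by simp
  qed
qed

end
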